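(* Let $K$ be a field, $c\in K\setminus\{0\}$, $n\ge1$, let $f,g$ be $c$-friezes of order $n$ over $K$, and let $\Sigma\subseteq\mathbb{B}_n$ be a section. Suppose that $f(p)=g(p)$ for all $p\in\Sigma$ and that $f(p)\neq0$ for every $p=(i,j)\in\Sigma$ with $-1\le j-i\le n$ (i.e. every point of $\Sigma$ in rows $0,\dots,n+1$). Then $f=g$.
   Context: The $c$-continuant polynomials $P_k=P_k^c$ ($k\ge-1$) are defined by $P_{-1}=0$, $P_0=1$, and for $k\ge1$, $P_k(x_1,\dots,x_k)=x_kP_{k-1}(x_1,\dots,x_{k-1})+cP_{k-2}(x_1,\dots,x_{k-2})$. A family $(x_i)_{i\in\mathbb{Z}}$ in $K$ is $n$-admissible if $P_{n+2}(x_i,\dots,x_{i+n+1})=0$ for all $i$. Let $\mathbb{B}_n=\{(i,j)\in\mathbb{Z}^2:-2\le j-i\le n+1\}$; the point $(i,j)$ lies in row $j-i+1$ (rows $-1,\dots,n+2$). A $c$-frieze of order $n$ is a function $f:\mathbb{B}_n\to K$ for which there is an $n$-admissible family $(x_i)$ with $f(i,j)=P_{j-i+1}(x_i,\dots,x_j)$ for all $(i,j)\in\mathbb{B}_n$ (rows $-1$ and $n+2$ are identically $0$, row $0$ identically $1$). A section is a subset $\Sigma\subseteq\mathbb{B}_n$ with $|\Sigma|=n+4$ such that for every $(i_0,j_0)\in\Sigma$: (a) if $(i_0,j_0-1)$ and $(i_0+1,j_0)$ lie in $\mathbb{B}_n$, at least one of them is in $\Sigma$; (b) if $(i_0-1,j_0)$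 and $(i_0,j_0+1)$ lie in $\mathbb{B}_n$, at least one of them is in $\Sigma$. *)

theory Defs
  imports Main
begin

(* c-continuant evaluated on the REVERSED argument list:
   contr c [x_k, ..., x_1] = P_k(x_1,...,x_k) for k >= 0 *)
fun contr :: "'a::field \<Rightarrow> 'a list \<Rightarrow> 'a" where
  "contr c [] = 1"
| "contr c [x] = x"
| "contr c (x # y # ys) = x * contr c (y # ys) + c * contr c ys"

definition contP :: "'a::field \<Rightarrow> int \<Rightarrow> 'a list \<Rightarrow> 'a" where
  "contP c k xs = (if k < 0 then 0 else contr c (rev xs))"

definition contF :: "'a::field \<Rightarrow> int \<Rightarrow> (int \<Rightarrow> 'a) \<Rightarrow> int \<Rightarrow> 'a" where
  "contF c k x i = contP c k (map x [i..i+k-1])"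

definition admissible :: "'a::field \<Rightarrow> nat \<Rightarrow> (int \<Rightarrow> 'a) \<Rightarrow> bool" where
  "admissible c n x \<longleftrightarrow> (\<forall>i. contF c (int n + 2) x i = 0)"

definition stripB :: "nat \<Rightarrow> (int \<times> int) set" where
  "stripB n = {(i, j). -2 \<le> j - i \<and> j - i \<le> int n + 1}"

definition is_frieze :: "'a::field \<Rightarrow> nat \<Rightarrow> (int \<times> int \<Rightarrow> 'a) \<Rightarrow> bool" where
  "is_frieze c n f \<longleftrightarrow> (\<exists>x. admissible c n x \<and>
      (\<forall>(i, j) \<in> stripB n. f (i, j) = contF c (j - i + 1) x i))"

definition is_section :: "nat \<Rightarrow> (int \<times> int) set \<Rightarrow> bool" where
  "is_section n S \<longleftrightarrow> S \<subseteq> stripB n \<and> finite S \<and> card S = n + 4 \<and>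
     (\<forall>(i, j) \<in> S.
        ((i, j - 1) \<in> stripB n \<and> (i + 1, j) \<in> stripB n \<longrightarrow> (i, j - 1) \<in> S \<or> (i + 1, j) \<in> S) \<and>
        ((i - 1, j) \<in> stripB n \<and> (i, j + 1) \<in> stripB n \<longrightarrow> (i - 1, j) \<in> S \<or> (i, j + 1) \<in> S))"

end

theory Submission
  imports Defs
begin

fun Q :: "'a::field \<Rightarrow> (int \<Rightarrow> 'a) \<Rightarrow> int \<Rightarrow> nat \<Rightarrow> 'a" where
  "Q c x i 0 = 1"
| "Q c x i (Suc 0) = x i"
| "Q c x i (Suc (Suc m)) = x (i + int m + 1) * Q c x i (Suc m) + c * Q c x i m"

lemma contr_Q: "contr c (rev (map x [i..i + int m - 1])) = Q c x i m"
proof (induction c x i m rule: Q.induct)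
  case (1 c x i) then show ?case by simp
next
  case (2 c x i) then show ?case by simp
next
  case (3 c x i m)
  have u1: "[i..i + int (Suc (Suc m)) - 1] = [i..i + int m - 1] @ [i + int m] @ [i + int m + 1]"
  proof -
    have "[i..i + int m + 1] = [i..i + int m] @ [i + int m + 1]"
      using upto_rec2[of i "i + int m + 1"] by simp
    moreover have "[i..i + int m] = [i..i + int m - 1] @ [i + int m]"
      using upto_rec2[of i "i + int m"] by simp
    ultimately show ?thesis by (simp add: algebra_simps)
  qed
  have u2: "[i..i + int (Suc m) - 1] = [i..i + int m - 1] @ [i + int m]"
    using upto_rec2[of i "i + int m"] by (simp add: algebra_simps)
  have "contr c (rev (map x [i..i + int (Suc (Suc m)) - 1]))
      = x (i + int m + 1) * contr c (x (i + int m) # rev (map x [i..i + int m - 1]))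
        + c * contr c (rev (map x [i..i + int m - 1]))"
    unfolding u1 by simp
  also have "contr c (x (i + int m) # rev (map x [i..i + int m - 1])) = Q c x i (Suc m)"
    using 3(1) unfolding u2 by simp
  finally show ?case using 3(2) by simp
qed

lemma contF_Q: "contF c (int m) x i = Q c x i m"
  unfolding contF_def contP_def using contr_Q by simp

lemma Q_dep: "(\<forall>k. i \<le> k \<and> k < i + int m \<longrightarrow> x k = y k) \<Longrightarrow> Q c x i m = Q c y i m"
  by (induction c x i m rule: Q.induct) auto

lemma Q_L: "Q c x i (Suc (Suc m)) = x i * Q c x (i+1) (Suc m) + c * Q c x (i+2) m"
proof (induction m arbitrary: i rule: nat_less_induct)
  case (1 m)
  show ?case
  proof (cases m)
    case 0 then show ?thesis by (simp add: algebra_simps)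
  next
    case (Suc k)
    show ?thesis
    proof (cases k)
      case 0 then show ?thesis using Suc by (simp add: algebra_simps)
    next
      case (Suc l)
      have m: "m = Suc (Suc l)" using Suc \<open>m = Suc k\<close> by simp
      have ih1: "Q c x i (Suc (Suc (Suc l))) = x i * Q c x (i+1) (Suc (Suc l)) + c * Q c x (i+2) (Suc l)"
        using 1 m by (metis lessI less_SucI)
      have ih2: "Q c x i (Suc (Suc l)) = x i * Q c x (i+1) (Suc l) + c * Q c x (i+2) l"
        using 1 m by (metis lessI less_SucI)
      have e0: "Q c x i (Suc (Suc m)) = x (i + int l + 3) * Q c x i (Suc (Suc (Suc l))) + c * Q c x i (Suc (Suc l))"
        unfolding m by (simp only: Q.simps) (simp add: algebra_simps)
      have e1: "Q c x (i+1) (Suc m) = x (i + int l + 3) * Q c x (i+1) (Suc (Suc l)) + c * Q c x (i+1) (Suc l)"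
        unfolding m by (simp only: Q.simps) (simp add: algebra_simps)
      have e2: "Q c x (i+2) m = x (i + int l + 3) * Q c x (i+2) (Suc l) + c * Q c x (i+2) l"
        unfolding m by (simp only: Q.simps) (simp add: algebra_simps)
      show ?thesis unfolding e0 e1 e2 ih1 ih2 by (simp add: algebra_simps)
    qed
  qed
qed

lemma Q_det: "Q c x i (Suc m) * Q c x (i+1) (Suc m) - Q c x i (Suc (Suc m)) * Q c x (i+1) m = (-c)^(Suc m)"
proof (induction m)
  case 0 then show ?case by (simp add: algebra_simps)
next
  case (Suc m)
  have e1: "Q c x i (Suc (Suc (Suc m))) = x (i + int m + 2) * Q c x i (Suc (Suc m)) + c * Q c x i (Suc m)"
    by (simp only: Q.simps) (simp add: algebra_simps)
  have e2: "Q c x (i+1) (Suc (Suc m)) = x (i + int m + 2) * Q c x (i+1) (Suc m) + c * Q c x (i+1) m"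
    by (simp only: Q.simps) (simp add: algebra_simps)
  have "Q c x i (Suc (Suc m)) * Q c x (i+1) (Suc (Suc m)) - Q c x i (Suc (Suc (Suc m))) * Q c x (i+1) (Suc m)
     = - c * (Q c x i (Suc m) * Q c x (i+1) (Suc m) - Q c x i (Suc (Suc m)) * Q c x (i+1) m)"
    unfolding e1 e2 by (simp add: algebra_simps)
  then show ?case using Suc by simp
qed

lemma adm_Q: "admissible c n x \<Longrightarrow> Q c x i (Suc (Suc n)) = 0"
  unfolding admissible_def using contF_Q[of c "Suc (Suc n)" x i] by (simp add: add.commute)

lemma Q_nz: assumes "c \<noteq> 0" "admissible c n x" shows "Q c x j (Suc n) \<noteq> 0"
proof
  assume h: "Q c x j (Suc n) = 0"
  have "Q c x (j-1) (Suc n) * Q c x j (Suc n) - Q c x (j-1) (Suc (Suc n)) * Q c x j n = (-c)^(Suc n)"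
    using Q_det[of c x "j-1" n] by (simp only: diff_add_cancel)
  then have "(-c)^(Suc n) = 0" using h adm_Q[OF assms(2), of "j-1"] by (simp del: Q.simps)
  then show False using assms(1) by simp
qed

lemma cancel: fixes u v P R c :: "'a::field"
  assumes "P \<noteq> 0" "u * P + c * R = v * P + c * R" shows "u = v"
  using assms by simp

lemma ext_seq:
  fixes x y :: "int \<Rightarrow> 'a::field"
  assumes c: "c \<noteq> 0" and ax: "admissible c n x" and ay: "admissible c n y"
    and agree: "\<forall>k. a \<le> k \<and> k \<le> a + int n \<longrightarrow> x k = y k"
  shows "x = y"
proof -
  have fw: "\<forall>k. a \<le> k \<and> k \<le> a + int n + int d \<longrightarrow> x k = y k" for d
  proof (induction d)
    case 0 then show ?case using agree by simp
  next
    case (Suc d)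
    show ?case
    proof (intro allI impI)
      fix k assume k: "a \<le> k \<and> k \<le> a + int n + int (Suc d)"
      show "x k = y k"
      proof (cases "k \<le> a + int n + int d")
        case True then show ?thesis using Suc k by auto
      next
        case False
        define j where "j = a + int d"
        have kj: "k = j + int n + 1" using False k j_def by simp
        have d1: "Q c x j (Suc n) = Q c y j (Suc n)"
          by (rule Q_dep) (use Suc j_def in auto)
        have d2: "Q c x j n = Q c y j n"
          by (rule Q_dep) (use Suc j_def in auto)
        have "x k * Q c x j (Suc n) + c * Q c x j n = y k * Q c x j (Suc n) + c * Q c x j n"
          using adm_Q[OF ax, of j] adm_Q[OF ay, of j] d1 d2 kj by simp
        then show ?thesis using cancel Q_nz[OF c ax] by blast
      qed
    qed
  qed
  have bw: "\<forall>k. a - int d \<le> k \<and> k \<le> a + int n \<longrightarrow> x k = y k" for d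
  proof (induction d)
    case 0 then show ?case using agree by simp
  next
    case (Suc d)
    show ?case
    proof (intro allI impI)
      fix k assume k: "a - int (Suc d) \<le> k \<and> k \<le> a + int n"
      show "x k = y k"
      proof (cases "a - int d \<le> k")
        case True then show ?thesis using Suc k by auto
      next
        case False
        have kk: "k = a - int d - 1" using False k by simp
        have d1: "Q c x (k+1) (Suc n) = Q c y (k+1) (Suc n)"
          by (rule Q_dep) (use Suc kk in auto)
        have d2: "Q c x (k+2) n = Q c y (k+2) n"
          by (rule Q_dep) (use Suc kk in auto)
        have "x k * Q c x (k+1) (Suc n) + c * Q c x (k+2) n = y k * Q c x (k+1) (Suc n) + c * Q c x (k+2) n"
          using adm_Q[OF ax, of k] adm_Q[OF ay, of k] d1 d2 Q_L[of c x k n] Q_L[of c y k n] by simp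
        then show ?thesis using cancel Q_nz[OF c ax] by blast
      qed
    qed
  qed
  show ?thesis
  proof
    fix k
    show "x k = y k"
    proof (cases "a \<le> k")
      case True then show ?thesis using fw[of "nat (k - a)"] by auto
    next
      case False then show ?thesis using bw[of "nat (a - k)"] by auto
    qed
  qed
qed

theorem mainTheorem4:
  fixes c :: "'a::field" and n :: nat and f g :: "int \<times> int \<Rightarrow> 'a" and S :: "(int \<times> int) set"
  assumes "c \<noteq> 0" and "n \<ge> 1"
    and "is_frieze c n f" and "is_frieze c n g"
    and "is_section n S"
    and "\<forall>p \<in> S. f p = g p"
    and "\<forall>(i, j) \<in> S. -1 \<le> j - i \<and> j - i \<le> int n \<longrightarrow> f (i, j) \<noteq> 0"
  shows "\<forall>p \<in> stripB n. f p = g p"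
proof -
  obtain x where ax: "admissible c n x" and fx: "\<forall>(i, j) \<in> stripB n. f (i, j) = contF c (j - i + 1) x i"
    using assms(3) unfolding is_frieze_def by blast
  obtain y where ay: "admissible c n y" and gy: "\<forall>(i, j) \<in> stripB n. g (i, j) = contF c (j - i + 1) y i"
    using assms(4) unfolding is_frieze_def by blast
  have sec: "S \<subseteq> stripB n" "finite S" "card S = n + 4"
    and sa: "\<And>i j. (i, j) \<in> S \<Longrightarrow> (i, j - 1) \<in> stripB n \<Longrightarrow> (i + 1, j) \<in> stripB n \<Longrightarrow> (i, j - 1) \<in> S \<or> (i + 1, j) \<in> S"
    and sb: "\<And>i j. (i, j) \<in> S \<Longrightarrow> (i - 1, j) \<in> stripB n \<Longrightarrow> (i, j + 1) \<in> stripB n \<Longrightarrow> (i - 1, j) \<in> S \<or> (i, j + 1) \<in> S"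
    using assms(5) unfolding is_section_def by blast+
  have fQ: "f (i, j) = Q c x i m" if "(i, j) \<in> stripB n" "j - i + 1 = int m" for i j m
    using fx that contF_Q[of c m x i] by auto
  have gQ: "g (i, j) = Q c y i m" if "(i, j) \<in> stripB n" "j - i + 1 = int m" for i j m
    using gy that contF_Q[of c m y i] by auto
  have down: "\<forall>i j. (i, j) \<in> S \<and> j - i = int d - 1 \<longrightarrow> (\<exists>a. (a, a - 1) \<in> S)" for d
  proof (induction d)
    case 0 show ?case
    proof (intro allI impI)
      fix i j assume h0: "(i, j) \<in> S \<and> j - i = int 0 - 1"
      then have e: "j = i - 1" by simp
      from h0 have "(i, j) \<in> S" by blast
      then have "(i, i - 1) \<in> S" unfolding e .
      then show "\<exists>a. (a, a - 1) \<in> S" by blast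
    qed
  next
    case (Suc d)
    show ?case
    proof (intro allI impI)
      fix i j assume h: "(i, j) \<in> S \<and> j - i = int (Suc d) - 1"
      then have "(i, j) \<in> stripB n" using sec by auto
      then have "(i, j - 1) \<in> stripB n" "(i + 1, j) \<in> stripB n" using h by (auto simp: stripB_def)
      then have "(i, j - 1) \<in> S \<or> (i + 1, j) \<in> S" using sa h by blast
      then show "\<exists>a. (a, a - 1) \<in> S"
      proof
        assume "(i, j - 1) \<in> S" then show ?thesis using Suc.IH h by force
      next
        assume "(i + 1, j) \<in> S" then show ?thesis using Suc.IH h by force
      qed
    qed
  qed
  have S0: "\<exists>a. (a, a - 1) \<in> S"
  proof -
    have "S \<noteq> {}" using sec by auto
    then obtain i j where ij: "(i, j) \<in> S" by auto
    show ?thesis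
    proof (cases "j - i = -2")
      case True
      have "(i - 1, j) \<in> stripB n" "(i, j + 1) \<in> stripB n" using True by (auto simp: stripB_def)
      then have "(i - 1, j) \<in> S \<or> (i, j + 1) \<in> S" using sb ij by blast
      then show ?thesis
      proof
        assume "(i - 1, j) \<in> S" then show ?thesis using True by (intro exI[of _ "i - 1"]) (auto simp: algebra_simps)
      next
        assume "(i, j + 1) \<in> S" then show ?thesis using True by (intro exI[of _ i]) (auto simp: algebra_simps)
      qed
    next
      case False
      have "(i, j) \<in> stripB n" using sec ij by auto
      then have "j - i \<ge> -1" using False by (auto simp: stripB_def)
      then have "j - i = int (nat (j - i + 1)) - 1" by simp
      then show ?thesis using down[of "nat (j - i + 1)", rule_format, of i j] ij by blast
    qed
  qed
  have main: "r \<le> n + 1 \<longrightarrow> (\<exists>a. (a, a + int r - 1) \<in> S \<and> (\<forall>k. a \<le> k \<and> k \<le> a + int r - 1 \<longrightarrow> x k = y k))" for r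
  proof (induction r)
    case 0 then show ?case using S0 by auto
  next
    case (Suc r)
    show ?case
    proof
      assume rl: "Suc r \<le> n + 1"
      then obtain a where aS: "(a, a + int r - 1) \<in> S" and ag: "\<forall>k. a \<le> k \<and> k \<le> a + int r - 1 \<longrightarrow> x k = y k"
        using Suc by auto
      have "(a - 1, a + int r - 1) \<in> stripB n" "(a, a + int r - 1 + 1) \<in> stripB n"
        using rl by (auto simp: stripB_def)
      then have alt: "(a - 1, a + int r - 1) \<in> S \<or> (a, a + int r - 1 + 1) \<in> S" using sb aS by blast
      show "\<exists>a. (a, a + int (Suc r) - 1) \<in> S \<and> (\<forall>k. a \<le> k \<and> k \<le> a + int (Suc r) - 1 \<longrightarrow> x k = y k)"
      proof (cases r)
        case 0
        obtain a' where a'S: "(a', a') \<in> S" using alt 0 by auto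
        have "a' \<le> a'" by simp
        have st: "(a', a') \<in> stripB n" using a'S sec by auto
        have "x a' = y a'" using fQ[OF st, of 1] gQ[OF st, of 1] assms(6) a'S by auto
        then show ?thesis using a'S 0 by (intro exI[of _ a']) auto
      next
        case (Suc m)
        have pS: "(a, a + int m) \<in> S" using aS Suc by simp
        have pst: "(a, a + int m) \<in> stripB n" using pS sec by auto
        have nz: "Q c x a (Suc m) \<noteq> 0"
          using assms(7) pS fQ[OF pst, of "Suc m"] rl Suc by auto
        have d1: "Q c x a (Suc m) = Q c y a (Suc m)"
          by (rule Q_dep) (use ag Suc in auto)
        have d2: "Q c x a m = Q c y a m"
          by (rule Q_dep) (use ag Suc in auto)
        from alt show ?thesis
        proof
          assume h: "(a - 1, a + int r - 1) \<in> S"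
          have h': "(a - 1, a + int m) \<in> S" using h Suc by simp
          have st: "(a - 1, a + int m) \<in> stripB n" using h' sec by auto
          have d3: "Q c x (a+1) m = Q c y (a+1) m"
            by (rule Q_dep) (use ag Suc in auto)
          have "f (a - 1, a + int m) = g (a - 1, a + int m)" using assms(6) h' by auto
          then have "Q c x (a - 1) (Suc (Suc m)) = Q c y (a - 1) (Suc (Suc m))"
            using fQ[OF st, of "Suc (Suc m)"] gQ[OF st, of "Suc (Suc m)"] by simp
          moreover have L1: "Q c x (a - 1) (Suc (Suc m)) = x (a - 1) * Q c x a (Suc m) + c * Q c x (a+1) m"
            using Q_L[of c x "a - 1" m] by (simp del: Q.simps add: algebra_simps)
          moreover have L2: "Q c y (a - 1) (Suc (Suc m)) = y (a - 1) * Q c y a (Suc m) + c * Q c y (a+1) m"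
            using Q_L[of c y "a - 1" m] by (simp del: Q.simps add: algebra_simps)
          ultimately have "x (a - 1) * Q c x a (Suc m) + c * Q c x (a+1) m = y (a - 1) * Q c y a (Suc m) + c * Q c y (a+1) m"
            by (simp only:)
          then have "x (a - 1) * Q c x a (Suc m) + c * Q c x (a+1) m = y (a - 1) * Q c x a (Suc m) + c * Q c x (a+1) m"
            unfolding d1[symmetric] d3[symmetric] .
          then have "x (a - 1) = y (a - 1)" using cancel nz by blast
          then have "\<forall>k. a - 1 \<le> k \<and> k \<le> a - 1 + int (Suc r) - 1 \<longrightarrow> x k = y k"
          proof (intro allI impI)
            fix k assume k: "a - 1 \<le> k \<and> k \<le> a - 1 + int (Suc r) - 1"
            show "x k = y k"
            proof (cases "k = a - 1")
              case True then show ?thesis using \<open>x (a - 1) = y (a - 1)\<close> by simp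
            next
              case False then have "a \<le> k \<and> k \<le> a + int r - 1" using k by simp
              then show ?thesis using ag by blast
            qed
          qed
          then show ?thesis using h' Suc by (intro exI[of _ "a - 1"]) auto
        next
          assume h: "(a, a + int r - 1 + 1) \<in> S"
          have h': "(a, a + int m + 1) \<in> S" using h Suc by simp
          have st: "(a, a + int m + 1) \<in> stripB n" using h' sec by auto
          have "f (a, a + int m + 1) = g (a, a + int m + 1)" using assms(6) h' by auto
          then have "Q c x a (Suc (Suc m)) = Q c y a (Suc (Suc m))"
            using fQ[OF st, of "Suc (Suc m)"] gQ[OF st, of "Suc (Suc m)"] by simp
          then have "x (a + int m + 1) * Q c x a (Suc m) + c * Q c x a m = y (a + int m + 1) * Q c x a (Suc m) + c * Q c x a m"
            using d1 d2 by simp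
          then have "x (a + int m + 1) = y (a + int m + 1)" using cancel nz by blast
          then have "\<forall>k. a \<le> k \<and> k \<le> a + int (Suc r) - 1 \<longrightarrow> x k = y k"
          proof (intro allI impI)
            fix k assume k: "a \<le> k \<and> k \<le> a + int (Suc r) - 1"
            show "x k = y k"
            proof (cases "k = a + int m + 1")
              case True then show ?thesis using \<open>x (a + int m + 1) = y (a + int m + 1)\<close> by simp
            next
              case False then have "a \<le> k \<and> k \<le> a + int r - 1" using k Suc by simp
              then show ?thesis using ag by blast
            qed
          qed
          moreover have "(a, a + int (Suc r) - 1) \<in> S" using h' Suc by (simp add: add.commute add.left_commute)
          ultimately show ?thesis by blast
        qed
      qed
    qed
  qed
  obtain a where "\<forall>k. a \<le> k \<and> k \<le> a + int (n + 1) - 1 \<longrightarrow> x k = y k" using main[of "n+1"] by auto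
  then have "\<forall>k. a \<le> k \<and> k \<le> a + int n \<longrightarrow> x k = y k" by simp
  then have "x = y" using ext_seq[OF assms(1) ax ay] by blast
  show ?thesis
  proof
    fix p assume p: "p \<in> stripB n"
    obtain i j where pij: "p = (i, j)" by (cases p)
    have "f (i, j) = contF c (j - i + 1) x i" using fx p pij by auto
    moreover have "g (i, j) = contF c (j - i + 1) y i" using gy p pij by auto
    ultimately show "f p = g p" using \<open>x = y\<close> pij by simp
  qed
qed

end
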